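(* Let $\hbar\in\mathbb C\setminus\{0\}$, $p=2\hbar$, $0\le\ell\le n$. For generic $z=(z_1,\dots,z_n)$, the functions $W_M(\cdot\,;z)$, $M\subset\{1,\dots,n\}$, $\#M=\ell$, form a basis of $\overline{\mathcal F}_q^{\wedge\ell}(z)$.
   Context: A point $z$ is generic if $z_k-z_m+\hbar\notin p\mathbb Z$ for $k\ne m$ (equivalently, since $p=2\hbar$, $\prod_{k<m}(e^{2\pi iz_k/p}+e^{2\pi iz_m/p})\ne0$). For $f(t_1,\dots,t_\ell)$, $\mathrm{Asym}\,f=\sum_{\sigma\in S_\ell}\mathrm{sgn}(\sigma)f(t_{\sigma_1},\dots,t_{\sigma_\ell})$. With $E(t)=e^{2\pi it/p}$ and $M=\{m_1<\dots<m_\ell\}$: $G_M(t)=\prod_{a=1}^\ell\Big(\frac{1}{E(t_a-z_{m_a})-1}\prod_{1\le j<m_a}\frac{E(t_a-z_j)+1}{E(t_a-z_j)-1}\Big)$, $W_M=\mathrm{Asym}\,G_M$. $\overline{\mathcal F}_q^{\wedge\ell}(z)$ is the space of functions $F(t_1,\dots,t_\ell)$ such that $F\prod_{m=1}^n\prod_{a=1}^\ell(1-E(t_a-z_m))$ is an antisymmetric polynomial in $E(t_1),\dots,E(t_\ell)$ of degree less than $n$ in each variable. *)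

theory Defs
  imports "HOL-Analysis.Analysis" "HOL-Combinatorics.Permutations"
begin

text \<open>Variables t_1..t_l and z_1..z_n are encoded as functions nat => complex,
  using the indices 1..l resp. 1..n. The parameter hb is hbar, p = 2 hbar.\<close>

definition Efun :: "complex \<Rightarrow> complex \<Rightarrow> complex" where
  "Efun hb x = exp (2 * of_real pi * \<i> * x / (2 * hb))"

definition generic :: "complex \<Rightarrow> nat \<Rightarrow> (nat \<Rightarrow> complex) \<Rightarrow> bool" where
  "generic hb n z \<longleftrightarrow>
     (\<forall>k\<in>{1..n}. \<forall>m\<in>{1..n}. k \<noteq> m \<longrightarrow>
        \<not> (\<exists>j::int. z k - z m + hb = of_int j * (2 * hb)))"

definition Asym :: "nat \<Rightarrow> ((nat \<Rightarrow> complex) \<Rightarrow> complex) \<Rightarrow> (nat \<Rightarrow> complex) \<Rightarrow> complex" where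
  "Asym l f t = (\<Sum>\<sigma> | \<sigma> permutes {1..l}. of_int (sign \<sigma>) * f (t \<circ> \<sigma>))"

definition melem :: "nat set \<Rightarrow> nat \<Rightarrow> nat" where
  "melem M a = sorted_list_of_set M ! (a - 1)"

definition G_fun :: "complex \<Rightarrow> nat \<Rightarrow> (nat \<Rightarrow> complex) \<Rightarrow> nat set \<Rightarrow> (nat \<Rightarrow> complex) \<Rightarrow> complex" where
  "G_fun hb l z M t = (\<Prod>a\<in>{1..l}.
      (1 / (Efun hb (t a - z (melem M a)) - 1)) *
      (\<Prod>j\<in>{1..<melem M a}. (Efun hb (t a - z j) + 1) / (Efun hb (t a - z j) - 1)))"

definition W_fun :: "complex \<Rightarrow> nat \<Rightarrow> (nat \<Rightarrow> complex) \<Rightarrow> nat set \<Rightarrow> (nat \<Rightarrow> complex) \<Rightarrow> complex" where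
  "W_fun hb l z M = Asym l (G_fun hb l z M)"

definition regular_pts :: "complex \<Rightarrow> nat \<Rightarrow> nat \<Rightarrow> (nat \<Rightarrow> complex) \<Rightarrow> (nat \<Rightarrow> complex) set" where
  "regular_pts hb n l z = {t. \<forall>a\<in>{1..l}. \<forall>m\<in>{1..n}. Efun hb (t a - z m) \<noteq> 1}"

text \<open>Polynomial in x_1..x_l with degree < n in each variable, given by coefficients
  indexed by exponent vectors e with e a < n (a = 1..l).\<close>
definition poly_val :: "nat \<Rightarrow> nat \<Rightarrow> ((nat \<Rightarrow> nat) \<Rightarrow> complex) \<Rightarrow> (nat \<Rightarrow> complex) \<Rightarrow> complex" where
  "poly_val n l c x = (\<Sum>e\<in>PiE {1..l} (\<lambda>_. {..<n}). c e * (\<Prod>a\<in>{1..l}. x a ^ e a))"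

definition antisym_poly :: "nat \<Rightarrow> nat \<Rightarrow> ((nat \<Rightarrow> nat) \<Rightarrow> complex) \<Rightarrow> bool" where
  "antisym_poly n l c \<longleftrightarrow>
     (\<forall>\<sigma>. \<sigma> permutes {1..l} \<longrightarrow>
        (\<forall>x. poly_val n l c (x \<circ> \<sigma>) = of_int (sign \<sigma>) * poly_val n l c x))"

text \<open>The space bar F_q^{wedge l}(z). Functions are meromorphic, so they are considered
  on the regular points (off the poles); equality in the space is equality there.\<close>
definition Fspace :: "complex \<Rightarrow> nat \<Rightarrow> nat \<Rightarrow> (nat \<Rightarrow> complex) \<Rightarrow> ((nat \<Rightarrow> complex) \<Rightarrow> complex) set" where
  "Fspace hb n l z = {F. \<exists>c. antisym_poly n l c \<and>
      (\<forall>t\<in>regular_pts hb n l z.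
         F t * (\<Prod>m\<in>{1..n}. \<Prod>a\<in>{1..l}. (1 - Efun hb (t a - z m)))
           = poly_val n l c (\<lambda>a. Efun hb (t a)))}"

end

theory Submission
  imports Defs "HOL-Computational_Algebra.Polynomial"
begin

definition pp :: "(nat \<Rightarrow> complex) \<Rightarrow> nat \<Rightarrow> nat \<Rightarrow> complex poly" where
 "pp a N m = smult (-1) ((\<Prod>j\<in>{1..<m}. [:-1, -inverse (a j):]) * (\<Prod>j\<in>{m<..N}. [:1, -inverse (a j):]))"

lemma pp_degree:
  assumes "1 \<le> m" "m \<le> N" shows "degree (pp a N m) < N"
proof -
  have d1: "degree (\<Prod>j\<in>{1..<m}. [:-1, -inverse (a j):]) \<le> m - 1"
    by (rule order.trans[OF degree_prod_sum_le]) (auto intro: order.trans[OF sum_mono[where g="\<lambda>_. 1"]])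
  have d2: "degree (\<Prod>j\<in>{m<..N}. [:1, -inverse (a j):]) \<le> N - m"
    by (rule order.trans[OF degree_prod_sum_le]) (auto intro: order.trans[OF sum_mono[where g="\<lambda>_. 1"]])
  have "degree (pp a N m) \<le> (m - 1) + (N - m)"
    unfolding pp_def degree_smult_eq using degree_mult_le[of "(\<Prod>j\<in>{1..<m}. [:-1, -inverse (a j):])" "(\<Prod>j\<in>{m<..N}. [:1, -inverse (a j):])"] d1 d2
    by auto
  then show ?thesis using assms by linarith
qed

lemma pp_Suc: "m \<le> N \<Longrightarrow> pp a (Suc N) m = pp a N m * [:1, -inverse (a (Suc N)):]"
proof -
  assume "m \<le> N"
  then have e: "{m<..Suc N} = insert (Suc N) {m<..N}" by auto
  have "(\<Prod>j\<in>{m<..Suc N}. [:1, -inverse (a j):]) = [:1, -inverse (a (Suc N)):] * (\<Prod>j\<in>{m<..N}. [:1, -inverse (a j):])"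
    unfolding e by (rule prod.insert) auto
  then show ?thesis unfolding pp_def by (simp only: mult_smult_left mult_smult_right ac_simps)
qed

lemma pp_vanish: "m \<le> N \<Longrightarrow> a (Suc N) \<noteq> 0 \<Longrightarrow> poly (pp a (Suc N) m) (a (Suc N)) = 0"
  by (simp add: pp_Suc)

lemma pp_last: "poly (pp a (Suc N) (Suc N)) (a (Suc N)) = - (\<Prod>j\<in>{1..<Suc N}. -1 - inverse (a j) * a (Suc N))"
  unfolding pp_def by (simp add: poly_prod mult.commute del: prod.op_ivl_Suc)

lemma pp_last_nz:
  assumes nz: "\<forall>j\<in>{1..N0}. a j \<noteq> 0" and gen: "\<forall>j\<in>{1..N0}. \<forall>k\<in>{1..N0}. a j + a k \<noteq> 0"
    and "Suc N \<le> N0"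
  shows "poly (pp a (Suc N) (Suc N)) (a (Suc N)) \<noteq> 0"
proof -
  have "-1 - inverse (a j) * a (Suc N) \<noteq> 0" if "j \<in> {1..<Suc N}" for j
  proof
    assume "-1 - inverse (a j) * a (Suc N) = 0"
    then have "a j * (-1 - inverse (a j) * a (Suc N)) = 0" by simp
    then have "- (a j + a (Suc N)) = 0" using nz that assms(3) by (simp add: algebra_simps)
    then have "a j + a (Suc N) = 0" by (simp add: neg_eq_iff_add_eq_0)
    moreover have "j \<in> {1..N0}" "Suc N \<in> {1..N0}" using that assms(3) by auto
    ultimately show False using gen by blast
  qed
  then show ?thesis unfolding pp_last by (simp del: prod.op_ivl_Suc)
qed

lemma lin_mult_pp: "a (Suc N) \<noteq> 0 \<Longrightarrow> m \<le> N \<Longrightarrow>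
   [:- a (Suc N), 1:] * pp a N m = smult (- a (Suc N)) (pp a (Suc N) m)"
proof -
  assume A: "a (Suc N) \<noteq> 0" "m \<le> N"
  have h: "smult (- a (Suc N)) [:1, -inverse (a (Suc N)):] = [:- a (Suc N), 1:]" using A by simp
  show ?thesis by (simp only: pp_Suc[OF A(2)] mult_smult_right[symmetric] h mult.commute)
qed

lemma pp_span:
  assumes nz: "\<forall>j\<in>{1..N0}. a j \<noteq> 0" and gen: "\<forall>j\<in>{1..N0}. \<forall>k\<in>{1..N0}. a j + a k \<noteq> 0"
  shows "N \<le> N0 \<Longrightarrow> degree f < N \<Longrightarrow> \<exists>\<beta>. f = (\<Sum>m\<in>{1..N}. smult (\<beta> m) (pp a N m))"
proof (induction N arbitrary: f)
  case 0
  then show ?case by simp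
next
  case (Suc N)
  define A where "A = a (Suc N)"
  define P where "P = pp a (Suc N) (Suc N)"
  define c where "c = poly f A / poly P A"
  have A0: "A \<noteq> 0" using nz Suc.prems unfolding A_def by auto
  have PA: "poly P A \<noteq> 0" unfolding P_def A_def by (rule pp_last_nz[OF nz gen Suc.prems(1)])
  define d where "d = f - smult c P"
  have "poly d A = 0" unfolding d_def c_def using PA by simp
  then obtain g where g: "d = [:-A, 1:] * g" using poly_eq_0_iff_dvd by (metis dvdE)
  have degP: "degree P < Suc N" unfolding P_def by (rule pp_degree) auto
  have degd: "degree d < Suc N" unfolding d_def less_Suc_eq_le
    by (rule degree_diff_le) (use Suc.prems degP in auto)
  have "\<exists>\<beta>'. g = (\<Sum>m\<in>{1..N}. smult (\<beta>' m) (pp a N m))"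
  proof (cases "g = 0")
    case True
    then show ?thesis by (intro exI[of _ "\<lambda>_. 0"]) simp
  next
    case False
    then have "degree d = degree g + 1" unfolding g by (subst degree_mult_eq) auto
    then have "degree g < N" using degd by simp
    then show ?thesis using Suc.IH Suc.prems by simp
  qed
  then obtain \<beta>' where b': "g = (\<Sum>m\<in>{1..N}. smult (\<beta>' m) (pp a N m))" by blast
  define \<beta> where "\<beta> m = (if m = Suc N then c else - A * \<beta>' m)" for m
  have "[:-A, 1:] * g = (\<Sum>m\<in>{1..N}. smult (\<beta> m) (pp a (Suc N) m))"
    unfolding b' sum_distrib_left
  proof (rule sum.cong[OF refl])
    fix m assume m: "m \<in> {1..N}"
    have "[:- A, 1:] * smult (\<beta>' m) (pp a N m) = smult (\<beta>' m) ([:- A, 1:] * pp a N m)" by simp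
    also have "\<dots> = smult (\<beta>' m) (smult (-A) (pp a (Suc N) m))"
      using lin_mult_pp[of a N m] A0 m unfolding A_def by simp
    finally show "[:- A, 1:] * smult (\<beta>' m) (pp a N m) = smult (\<beta> m) (pp a (Suc N) m)"
      using m unfolding \<beta>_def by (simp add: mult.commute)
  qed
  then have "f = smult (\<beta> (Suc N)) (pp a (Suc N) (Suc N)) + (\<Sum>m\<in>{1..N}. smult (\<beta> m) (pp a (Suc N) m))"
    using g unfolding d_def \<beta>_def P_def by (simp add: algebra_simps)
  also have "\<dots> = (\<Sum>m\<in>{1..Suc N}. smult (\<beta> m) (pp a (Suc N) m))"
    by (simp add: add.commute)
  finally show ?case by blast
qed

lemma pp_indep:
  assumes nz: "\<forall>j\<in>{1..N0}. a j \<noteq> 0" and gen: "\<forall>j\<in>{1..N0}. \<forall>k\<in>{1..N0}. a j + a k \<noteq> 0"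
  shows "N \<le> N0 \<Longrightarrow> (\<Sum>m\<in>{1..N}. smult (\<beta> m) (pp a N m)) = 0 \<Longrightarrow> \<forall>m\<in>{1..N}. \<beta> m = 0"
proof (induction N arbitrary: \<beta>)
  case 0
  then show ?case by simp
next
  case (Suc N)
  define A where "A = a (Suc N)"
  have A0: "A \<noteq> 0" using nz Suc.prems unfolding A_def by auto
  have PA: "poly (pp a (Suc N) (Suc N)) A \<noteq> 0" unfolding A_def by (rule pp_last_nz[OF nz gen Suc.prems(1)])
  have S: "(\<Sum>m\<in>{1..Suc N}. smult (\<beta> m) (pp a (Suc N) m)) =
     smult (\<beta> (Suc N)) (pp a (Suc N) (Suc N)) + (\<Sum>m\<in>{1..N}. smult (\<beta> m) (pp a (Suc N) m))"
    by (simp add: add.commute)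
  have "poly (\<Sum>m\<in>{1..N}. smult (\<beta> m) (pp a (Suc N) m)) A = 0"
    unfolding poly_sum using pp_vanish[of _ N a] A0 unfolding A_def by (auto intro!: sum.neutral)
  then have "\<beta> (Suc N) * poly (pp a (Suc N) (Suc N)) A = 0"
    using arg_cong[OF Suc.prems(2), of "\<lambda>p. poly p A"] unfolding S by simp
  then have b0: "\<beta> (Suc N) = 0" using PA by simp
  have "(\<Sum>m\<in>{1..N}. smult (\<beta> m) (pp a (Suc N) m)) = (\<Sum>m\<in>{1..N}. smult (\<beta> m) (pp a N m)) * [:1, -inverse A:]"
    unfolding sum_distrib_right A_def by (rule sum.cong) (auto simp only: atLeastAtMost_iff pp_Suc mult_smult_left)
  then have "(\<Sum>m\<in>{1..N}. smult (\<beta> m) (pp a N m)) * [:1, -inverse A:] = 0"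
    using Suc.prems(2) unfolding S b0 by simp
  moreover have "[:1, -inverse A:] \<noteq> 0" by simp
  ultimately have "(\<Sum>m\<in>{1..N}. smult (\<beta> m) (pp a N m)) = 0" using mult_eq_0_iff by blast
  then have "\<forall>m\<in>{1..N}. \<beta> m = 0" using Suc.IH Suc.prems by simp
  then show ?case using b0 by (auto simp: le_Suc_eq)
qed

definition lag :: "(nat \<Rightarrow> complex) \<Rightarrow> nat \<Rightarrow> nat \<Rightarrow> complex poly" where
  "lag s N i = smult (inverse (\<Prod>k\<in>{1..N}-{i}. (s i - s k))) (\<Prod>k\<in>{1..N}-{i}. [:-s k, 1:])"

lemma lag_degree: "i \<in> {1..N} \<Longrightarrow> degree (lag s N i) < N"
proof -
  assume i: "i \<in> {1..N}"
  have "degree (\<Prod>k\<in>{1..N}-{i}. [:-s k, 1:]) \<le> (\<Sum>k\<in>{1..N}-{i}. 1)"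
    by (rule order.trans[OF degree_prod_sum_le]) (auto intro: sum_mono)
  also have "\<dots> = N - 1" using i by simp
  finally have "degree (lag s N i) \<le> N - 1" unfolding lag_def by (rule order.trans[OF degree_smult_le])
  moreover have "1 \<le> N" using i by simp
  ultimately show ?thesis by arith
qed

lemma lag_poly: "poly (lag s N i) x = inverse (\<Prod>k\<in>{1..N}-{i}. (s i - s k)) * (\<Prod>k\<in>{1..N}-{i}. (x - s k))"
  unfolding lag_def poly_smult poly_prod by simp

lemma lag_eval: "inj_on s {1..N} \<Longrightarrow> i \<in> {1..N} \<Longrightarrow> j \<in> {1..N} \<Longrightarrow>
   poly (lag s N i) (s j) = (if i = j then 1 else 0)"
proof -
  assume inj: "inj_on s {1..N}" and i: "i \<in> {1..N}" and j: "j \<in> {1..N}"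
  show ?thesis
  proof (cases "i = j")
    case True
    have "(\<Prod>k\<in>{1..N}-{i}. (s i - s k)) \<noteq> 0"
    proof (subst prod_zero_iff)
      show "finite ({1..N} - {i})" by simp
      show "\<not> (\<exists>k\<in>{1..N} - {i}. s i - s k = 0)"
      proof
        assume "\<exists>k\<in>{1..N} - {i}. s i - s k = 0"
        then obtain k where k: "k \<in> {1..N} - {i}" "s i - s k = 0" by blast
        then have "s i = s k" by simp
        then have "i = k" using inj i k(1) unfolding inj_on_def by blast
        then show False using k(1) by blast
      qed
    qed
    then show ?thesis using True unfolding lag_poly by simp
  next
    case False
    have "(\<Prod>k\<in>{1..N}-{i}. (s j - s k)) = 0"
    proof (rule prod_zero)
      show "finite ({1..N} - {i})" by simp
      show "\<exists>k\<in>{1..N} - {i}. s j - s k = 0" using j False by (intro bexI[of _ j]) auto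
    qed
    then show ?thesis using False unfolding lag_poly by simp
  qed
qed

lemma lag_degree': "i \<in> {1..N} \<Longrightarrow> degree (smult c (lag s N i)) \<le> N - 1"
  using lag_degree[of i N s] degree_smult_le[of c "lag s N i"] by arith

lemma smult_sum_right: "smult c (sum f S) = (\<Sum>i\<in>S. smult c (f i))"
  by (induction S rule: infinite_finite_induct) (auto simp: smult_add_right)

lemma lagrange:
  assumes inj: "inj_on s {1..N}" and df: "degree f < N"
  shows "f = (\<Sum>i\<in>{1..N}. smult (poly f (s i)) (lag s N i))"
proof (rule ccontr)
  define d where "d = f - (\<Sum>i\<in>{1..N}. smult (poly f (s i)) (lag s N i))"
  assume "f \<noteq> (\<Sum>i\<in>{1..N}. smult (poly f (s i)) (lag s N i))"
  then have d0: "d \<noteq> 0" unfolding d_def by simp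
  have "degree (\<Sum>i\<in>{1..N}. smult (poly f (s i)) (lag s N i)) \<le> N - 1"
    by (rule degree_sum_le, simp, rule lag_degree', assumption)
  then have dd: "degree d < N"
  proof -
    have "1 \<le> N" using df by simp
    then have "degree d \<le> N - 1" unfolding d_def using df \<open>degree (\<Sum>i\<in>{1..N}. _) \<le> N - 1\<close>
      by (intro degree_diff_le) auto
    then show ?thesis using \<open>1 \<le> N\<close> by arith
  qed
  have roots: "s ` {1..N} \<subseteq> {x. poly d x = 0}"
  proof
    fix x assume "x \<in> s ` {1..N}"
    then obtain j where j: "j \<in> {1..N}" "x = s j" by auto
    have "poly (\<Sum>i\<in>{1..N}. smult (poly f (s i)) (lag s N i)) (s j) = (\<Sum>i\<in>{1..N}. poly f (s i) * (if i = j then 1 else 0))"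
      unfolding poly_sum by (rule sum.cong) (use lag_eval[OF inj _ j(1)] in auto)
    also have "\<dots> = poly f (s j)" using j by (simp add: if_distrib cong: if_cong)
    finally show "x \<in> {x. poly d x = 0}" using j unfolding d_def by simp
  qed
  have "N = card (s ` {1..N})" using card_image[OF inj] by simp
  also have "\<dots> \<le> card {x. poly d x = 0}" by (rule card_mono[OF poly_roots_finite[OF d0] roots])
  also have "\<dots> \<le> degree d" by (rule card_poly_roots_bound[OF d0])
  finally show False using dd by simp
qed

lemma duals:
  assumes nz: "\<forall>j\<in>{1..n}. a j \<noteq> 0" and gen: "\<forall>j\<in>{1..n}. \<forall>k\<in>{1..n}. a j + a k \<noteq> 0"
    and inj: "inj_on s {1..n}"
  shows "\<exists>\<mu>. (\<forall>f. degree f < n \<longrightarrow> f = (\<Sum>m\<in>{1..n}. smult (\<Sum>i\<in>{1..n}. \<mu> m i * poly f (s i)) (pp a n m)))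
     \<and> (\<forall>k\<in>{1..n}. \<forall>m\<in>{1..n}. (\<Sum>i\<in>{1..n}. \<mu> k i * poly (pp a n m) (s i)) = (if k = m then 1 else 0))"
proof -
  have "\<forall>i\<in>{1..n}. \<exists>\<beta>. lag s n i = (\<Sum>m\<in>{1..n}. smult (\<beta> m) (pp a n m))"
    using pp_span[OF nz gen le_refl] lag_degree by blast
  then obtain \<beta> where \<beta>: "\<And>i. i \<in> {1..n} \<Longrightarrow> lag s n i = (\<Sum>m\<in>{1..n}. smult (\<beta> i m) (pp a n m))"
    by metis
  define \<mu> where "\<mu> m i = \<beta> i m" for m i
  have rep: "f = (\<Sum>m\<in>{1..n}. smult (\<Sum>i\<in>{1..n}. \<mu> m i * poly f (s i)) (pp a n m))" if "degree f < n" for f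
  proof -
    have "f = (\<Sum>i\<in>{1..n}. smult (poly f (s i)) (lag s n i))" by (rule lagrange[OF inj that])
    also have "\<dots> = (\<Sum>i\<in>{1..n}. \<Sum>m\<in>{1..n}. smult (\<mu> m i * poly f (s i)) (pp a n m))"
      by (rule sum.cong[OF refl]) (simp add: \<beta> \<mu>_def smult_sum_right mult.commute)
    also have "\<dots> = (\<Sum>m\<in>{1..n}. smult (\<Sum>i\<in>{1..n}. \<mu> m i * poly f (s i)) (pp a n m))"
      by (subst sum.swap) (simp add: smult_sum)
    finally show ?thesis .
  qed
  have dual: "(\<Sum>i\<in>{1..n}. \<mu> k i * poly (pp a n m) (s i)) = (if k = m then 1 else 0)"
    if k: "k \<in> {1..n}" and m: "m \<in> {1..n}" for k m
  proof -
    define \<gamma> where "\<gamma> k = (\<Sum>i\<in>{1..n}. \<mu> k i * poly (pp a n m) (s i)) - (if k = m then 1 else 0)" for k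
    have dm: "degree (pp a n m) < n" using m by (intro pp_degree) auto
    have "(\<Sum>k\<in>{1..n}. smult (if k = m then 1 else 0) (pp a n k)) = pp a n m"
    proof -
      have "(\<Sum>k\<in>{1..n}. smult (if k = m then 1 else 0) (pp a n k)) = (\<Sum>k\<in>{1..n}. if k = m then pp a n k else 0)"
        by (rule sum.cong) auto
      then show ?thesis using m by (simp add: sum.delta)
    qed
    then have "(\<Sum>k\<in>{1..n}. smult (\<gamma> k) (pp a n k)) = 0"
      unfolding \<gamma>_def smult_diff_left sum_subtractf using rep[OF dm] by simp
    then have "\<forall>k\<in>{1..n}. \<gamma> k = 0" by (rule pp_indep[OF nz gen le_refl])
    then show ?thesis using k unfolding \<gamma>_def by simp
  qed
  show ?thesis using rep dual by blast
qed

lemma poly_lt_n: "degree (p :: complex poly) < n \<Longrightarrow> poly p y = (\<Sum>k<n. coeff p k * y ^ k)"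
proof -
  assume d: "degree p < n"
  have "poly p y = (\<Sum>k\<le>degree p. coeff p k * y ^ k)" by (rule poly_altdef)
  also have "\<dots> = (\<Sum>k<n. coeff p k * y ^ k)"
    by (rule sum.mono_neutral_left) (use d in \<open>auto simp: coeff_eq_0\<close>)
  finally show ?thesis .
qed

definition polyfun :: "nat \<Rightarrow> nat \<Rightarrow> ((nat \<Rightarrow> complex) \<Rightarrow> complex) \<Rightarrow> bool" where
  "polyfun n l h \<longleftrightarrow> (\<exists>c. \<forall>x. h x = poly_val n l c x)"

lemma polyfun_prod:
  assumes "\<forall>b\<in>{1..l}. degree (q b) < n"
  shows "polyfun n l (\<lambda>x. \<Prod>b\<in>{1..l}. poly (q b) (x b))"
proof -
  have "(\<Prod>b\<in>{1..l}. poly (q b) (x b)) = poly_val n l (\<lambda>e. \<Prod>b\<in>{1..l}. coeff (q b) (e b)) x" for x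
  proof -
    have "(\<Prod>b\<in>{1..l}. poly (q b) (x b)) = (\<Prod>b\<in>{1..l}. \<Sum>k\<in>{..<n}. coeff (q b) k * x b ^ k)"
      using assms by (intro prod.cong refl poly_lt_n) auto
    also have "\<dots> = (\<Sum>e\<in>PiE {1..l} (\<lambda>_. {..<n}). \<Prod>b\<in>{1..l}. coeff (q b) (e b) * x b ^ e b)"
      by (rule prod_sum_PiE) auto
    also have "\<dots> = poly_val n l (\<lambda>e. \<Prod>b\<in>{1..l}. coeff (q b) (e b)) x"
      unfolding poly_val_def by (simp add: prod.distrib)
    finally show ?thesis .
  qed
  then show ?thesis unfolding polyfun_def by blast
qed

lemma poly_val_lin: "finite A \<Longrightarrow> poly_val n l (\<lambda>e. \<Sum>M\<in>A. d M * cs M e) x = (\<Sum>M\<in>A. d M * poly_val n l (cs M) x)"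
  unfolding poly_val_def by (simp add: sum_distrib_left sum_distrib_right mult_ac sum.swap[of _ A])

lemma polyfun_sum:
  assumes "finite A" "\<forall>M\<in>A. polyfun n l (f M)"
  shows "polyfun n l (\<lambda>x. \<Sum>M\<in>A. d M * f M x)"
proof -
  from assms(2) obtain cs where cs: "\<forall>M\<in>A. \<forall>x. f M x = poly_val n l (cs M) x"
    unfolding polyfun_def by metis
  have "(\<Sum>M\<in>A. d M * f M x) = poly_val n l (\<lambda>e. \<Sum>M\<in>A. d M * cs M e) x" for x
    using cs by (simp add: poly_val_lin[OF assms(1)])
  then show ?thesis unfolding polyfun_def by blast
qed

lemma polyfun_diff:
  assumes "polyfun n l f" "polyfun n l g"
  shows "polyfun n l (\<lambda>x. f x - g x)"
proof -
  from assms obtain c1 c2 where "\<forall>x. f x = poly_val n l c1 x" "\<forall>x. g x = poly_val n l c2 x"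
    unfolding polyfun_def by metis
  then have "f x - g x = poly_val n l (\<lambda>e. c1 e - c2 e) x" for x
    unfolding poly_val_def by (simp add: algebra_simps sum_subtractf)
  then show ?thesis unfolding polyfun_def by blast
qed

lemma Asym_perm:
  assumes "\<sigma> permutes {1..l}"
  shows "Asym l f (t \<circ> \<sigma>) = of_int (sign \<sigma>) * Asym l f t"
proof -
  have perm: "permutation \<sigma>" using assms permutation_permutes by blast
  have "Asym l f t = (\<Sum>\<rho> | \<rho> permutes {1..l}. of_int (sign (\<sigma> \<circ> \<rho>)) * f (t \<circ> (\<sigma> \<circ> \<rho>)))"
    unfolding Asym_def by (rule setum_permutations_compose_left[OF assms])
  also have "\<dots> = (\<Sum>\<rho> | \<rho> permutes {1..l}. of_int (sign \<sigma>) * (of_int (sign \<rho>) * f ((t \<circ> \<sigma>) \<circ> \<rho>)))"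
  proof (rule sum.cong[OF refl])
    fix \<rho> assume "\<rho> \<in> {\<rho>. \<rho> permutes {1..l}}"
    then have "permutation \<rho>" using permutation_permutes by blast
    then show "of_int (sign (\<sigma> \<circ> \<rho>)) * f (t \<circ> (\<sigma> \<circ> \<rho>)) = of_int (sign \<sigma>) * (of_int (sign \<rho>) * f ((t \<circ> \<sigma>) \<circ> \<rho>))"
      using perm by (simp add: sign_compose o_assoc)
  qed
  also have "\<dots> = of_int (sign \<sigma>) * Asym l f (t \<circ> \<sigma>)"
    unfolding Asym_def sum_distrib_left ..
  finally have "Asym l f t = of_int (sign \<sigma>) * Asym l f (t \<circ> \<sigma>)" .
  then have "of_int (sign \<sigma>) * Asym l f t = of_int (sign \<sigma> * sign \<sigma>) * Asym l f (t \<circ> \<sigma>)"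
    by (simp only: of_int_mult mult.assoc)
  then show ?thesis by simp
qed

lemma prod_perm_reindex:
  assumes "\<sigma> permutes {1..l}"
  shows "(\<Prod>b\<in>{1..l}. g (inv \<sigma> b) (x b)) = (\<Prod>b\<in>{1..l}. g b (x (\<sigma> b)))"
  using prod.permute[OF assms, of "\<lambda>b. g (inv \<sigma> b) (x b)"] by (simp add: o_def permutes_inverses[OF assms])

lemma Asym_prod_expand:
  "Asym l (\<lambda>y. \<Prod>b\<in>{1..l}. poly (q b) (y b)) x =
     (\<Sum>\<sigma> | \<sigma> permutes {1..l}. of_int (sign \<sigma>) * (\<Prod>b\<in>{1..l}. poly (q (inv \<sigma> b)) (x b)))"
  unfolding Asym_def
proof (rule sum.cong[OF refl])
  fix \<sigma> assume "\<sigma> \<in> {\<sigma>. \<sigma> permutes {1..l}}"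
  then have p: "\<sigma> permutes {1..l}" by simp
  show "of_int (sign \<sigma>) * (\<Prod>b\<in>{1..l}. poly (q b) ((x \<circ> \<sigma>) b)) =
     of_int (sign \<sigma>) * (\<Prod>b\<in>{1..l}. poly (q (inv \<sigma> b)) (x b))"
    using prod_perm_reindex[OF p, of "\<lambda>b y. poly (q b) y" x] by simp
qed

lemma polyfun_Asym:
  assumes "\<forall>b\<in>{1..l}. degree (q b) < n"
  shows "polyfun n l (Asym l (\<lambda>y. \<Prod>b\<in>{1..l}. poly (q b) (y b)))"
proof -
  have "polyfun n l (\<lambda>x. \<Sum>\<sigma>\<in>{\<sigma>. \<sigma> permutes {1..l}}. of_int (sign \<sigma>) * (\<Prod>b\<in>{1..l}. poly (q (inv \<sigma> b)) (x b)))"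
  proof (rule polyfun_sum)
    show "finite {\<sigma>. \<sigma> permutes {1..l}}" by (simp add: finite_permutations)
    show "\<forall>\<sigma>\<in>{\<sigma>. \<sigma> permutes {1..l}}. polyfun n l (\<lambda>x. \<Prod>b\<in>{1..l}. poly (q (inv \<sigma> b)) (x b))"
    proof
      fix \<sigma> assume "\<sigma> \<in> {\<sigma>. \<sigma> permutes {1..l}}"
      then have p: "\<sigma> permutes {1..l}" by simp
      show "polyfun n l (\<lambda>x. \<Prod>b\<in>{1..l}. poly (q (inv \<sigma> b)) (x b))"
        by (rule polyfun_prod) (use assms permutes_in_image[OF permutes_inv[OF p]] in auto)
    qed
  qed
  then show ?thesis unfolding polyfun_def Asym_prod_expand by simp
qed

lemma melem_bij:
  assumes "finite M" "card M = l"
  shows "bij_betw (melem M) {1..l} M"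
proof -
  let ?xs = "sorted_list_of_set M"
  have b1: "bij_betw ((!) ?xs) {..<l} M"
    by (rule bij_betw_nth) (use assms in auto)
  have b2: "bij_betw (\<lambda>a. a - 1) {1..l} {..<l}"
    by (rule bij_betw_byWitness[where f'="\<lambda>a. a + 1"]) auto
  have "bij_betw ((!) ?xs \<circ> (\<lambda>a. a - 1)) {1..l} M" by (rule bij_betw_trans[OF b2 b1])
  then show ?thesis unfolding melem_def o_def .
qed

lemma PiE_comp_perm:
  assumes p: "\<sigma> permutes {1..l}" and j: "j \<in> PiE {1..l} (\<lambda>_. B)"
  shows "j \<circ> \<sigma> \<in> PiE {1..l} (\<lambda>_. B)"
proof -
  have "\<forall>b\<in>{1..l}. (j \<circ> \<sigma>) b \<in> B" using j permutes_in_image[OF p] by (auto simp: PiE_iff)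
  moreover have "(j \<circ> \<sigma>) \<in> extensional {1..l}"
    using j permutes_not_in[OF p] by (auto simp: PiE_iff extensional_def)
  ultimately show ?thesis by (simp add: PiE_iff)
qed

lemma sum_PiE_perm:
  assumes p: "\<sigma> permutes {1..l}"
  shows "(\<Sum>i\<in>PiE {1..l} (\<lambda>_. B). F i) = (\<Sum>j\<in>PiE {1..l} (\<lambda>_. B). F (j \<circ> \<sigma>))"
proof -
  let ?P = "PiE {1..l} (\<lambda>_. B)"
  have inj: "inj_on (\<lambda>j. j \<circ> \<sigma>) ?P"
  proof (rule inj_onI)
    fix j j' assume "j \<circ> \<sigma> = j' \<circ> \<sigma>"
    then have "j \<circ> \<sigma> \<circ> inv \<sigma> = j' \<circ> \<sigma> \<circ> inv \<sigma>" by simp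
    then show "j = j'" using permutes_inv_o(1)[OF p] by (simp add: o_assoc[symmetric])
  qed
  have img: "(\<lambda>j. j \<circ> \<sigma>) ` ?P = ?P"
  proof
    show "(\<lambda>j. j \<circ> \<sigma>) ` ?P \<subseteq> ?P" using PiE_comp_perm[OF p] by blast
    show "?P \<subseteq> (\<lambda>j. j \<circ> \<sigma>) ` ?P"
    proof
      fix i assume i: "i \<in> ?P"
      have "i = (i \<circ> inv \<sigma>) \<circ> \<sigma>" using permutes_inv_o(2)[OF p] by (simp add: o_assoc[symmetric])
      moreover have "i \<circ> inv \<sigma> \<in> ?P" by (rule PiE_comp_perm[OF permutes_inv[OF p] i])
      ultimately show "i \<in> (\<lambda>j. j \<circ> \<sigma>) ` ?P" by blast
    qed
  qed
  show ?thesis using sum.reindex[OF inj, of F] img by (simp add: o_def)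
qed

definition wfun :: "nat \<Rightarrow> nat \<Rightarrow> (nat \<Rightarrow> complex) \<Rightarrow> nat set \<Rightarrow> (nat \<Rightarrow> complex) \<Rightarrow> complex" where
  "wfun n l a M = Asym l (\<lambda>y. \<Prod>b\<in>{1..l}. poly (pp a n (melem M b)) (y b))"

locale mv =
  fixes n l :: nat and a s :: "nat \<Rightarrow> complex" and \<mu> :: "nat \<Rightarrow> nat \<Rightarrow> complex"
  assumes rep: "\<And>f. degree f < n \<Longrightarrow> f = (\<Sum>m\<in>{1..n}. smult (\<Sum>i\<in>{1..n}. \<mu> m i * poly f (s i)) (pp a n m))"
  and dual: "\<And>k m. k \<in> {1..n} \<Longrightarrow> m \<in> {1..n} \<Longrightarrow> (\<Sum>i\<in>{1..n}. \<mu> k i * poly (pp a n m) (s i)) = (if k = m then 1 else 0)"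
begin

definition lam where "lam m f = (\<Sum>i\<in>{1..n}. \<mu> m i * poly f (s i))"
definition Lam where "Lam g h = (\<Sum>i\<in>PiE {1..l} (\<lambda>_. {1..n}). (\<Prod>b\<in>{1..l}. \<mu> (g b) (i b)) * h (s \<circ> i))"
definition Sets where "Sets = {M. M \<subseteq> {1..n} \<and> card M = l}"

lemma finite_Sets: "finite Sets"
proof -
  have "Sets \<subseteq> Pow {1..n}" unfolding Sets_def by auto
  then show ?thesis by (rule finite_subset) simp
qed

lemma Lam_lin: "finite A \<Longrightarrow> Lam g (\<lambda>x. \<Sum>M\<in>A. d M * f M x) = (\<Sum>M\<in>A. d M * Lam g (f M))"
  unfolding Lam_def by (simp add: sum_distrib_left sum_distrib_right mult_ac sum.swap[of _ A])

lemma Lam_diff: "Lam g (\<lambda>x. f1 x - f2 x) = Lam g f1 - Lam g f2"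
  unfolding Lam_def by (simp add: algebra_simps sum_subtractf)

lemma Lam_prod: "Lam g (\<lambda>x. \<Prod>b\<in>{1..l}. poly (q b) (x b)) = (\<Prod>b\<in>{1..l}. lam (g b) (q b))"
proof -
  have "Lam g (\<lambda>x. \<Prod>b\<in>{1..l}. poly (q b) (x b)) =
     (\<Sum>i\<in>PiE {1..l} (\<lambda>_. {1..n}). \<Prod>b\<in>{1..l}. \<mu> (g b) (i b) * poly (q b) (s (i b)))"
    unfolding Lam_def by (simp add: prod.distrib)
  also have "\<dots> = (\<Prod>b\<in>{1..l}. \<Sum>j\<in>{1..n}. \<mu> (g b) j * poly (q b) (s j))"
    by (rule prod_sum_PiE[symmetric]) auto
  finally show ?thesis unfolding lam_def .
qed

lemma Lam_cong: "\<forall>b\<in>{1..l}. g b = g' b \<Longrightarrow> Lam g h = Lam g' h"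
  unfolding Lam_def by (intro sum.cong refl arg_cong2[where f="(*)"] prod.cong) auto

lemma Lam_antisym:
  assumes anti: "\<forall>\<sigma> x. \<sigma> permutes {1..l} \<longrightarrow> h (x \<circ> \<sigma>) = of_int (sign \<sigma>) * h x"
    and p: "\<sigma> permutes {1..l}"
  shows "Lam (g \<circ> \<sigma>) h = of_int (sign \<sigma>) * Lam g h"
proof -
  have "Lam (g \<circ> \<sigma>) h = (\<Sum>j\<in>PiE {1..l} (\<lambda>_. {1..n}). (\<Prod>b\<in>{1..l}. \<mu> (g (\<sigma> b)) ((j \<circ> \<sigma>) b)) * h (s \<circ> (j \<circ> \<sigma>)))"
    unfolding Lam_def by (subst sum_PiE_perm[OF p]) simp
  also have "\<dots> = (\<Sum>j\<in>PiE {1..l} (\<lambda>_. {1..n}). of_int (sign \<sigma>) * ((\<Prod>b\<in>{1..l}. \<mu> (g b) (j b)) * h (s \<circ> j)))"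
  proof (rule sum.cong[OF refl])
    fix j
    have "(\<Prod>b\<in>{1..l}. \<mu> (g (\<sigma> b)) ((j \<circ> \<sigma>) b)) = (\<Prod>b\<in>{1..l}. \<mu> (g b) (j b))"
      using prod.permute[OF p, of "\<lambda>b. \<mu> (g b) (j b)"] by (simp add: o_def)
    moreover have "h (s \<circ> (j \<circ> \<sigma>)) = of_int (sign \<sigma>) * h (s \<circ> j)"
      using anti p by (simp add: o_assoc)
    ultimately show "(\<Prod>b\<in>{1..l}. \<mu> (g (\<sigma> b)) ((j \<circ> \<sigma>) b)) * h (s \<circ> (j \<circ> \<sigma>)) =
      of_int (sign \<sigma>) * ((\<Prod>b\<in>{1..l}. \<mu> (g b) (j b)) * h (s \<circ> j))" by simp
  qed
  also have "\<dots> = of_int (sign \<sigma>) * Lam g h" unfolding Lam_def sum_distrib_left ..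
  finally show ?thesis .
qed

lemma Lam_noninj:
  assumes anti: "\<forall>\<sigma> x. \<sigma> permutes {1..l} \<longrightarrow> h (x \<circ> \<sigma>) = of_int (sign \<sigma>) * h x"
    and b: "b1 \<in> {1..l}" "b2 \<in> {1..l}" "b1 \<noteq> b2" "g b1 = g b2"
  shows "Lam g h = 0"
proof -
  let ?t = "Transposition.transpose b1 b2"
  have p: "?t permutes {1..l}" using b by (intro permutes_swap_id) auto
  have "g \<circ> ?t = g" using b by (auto simp: fun_eq_iff Transposition.transpose_def)
  then have "Lam g h = of_int (sign ?t) * Lam g h" using Lam_antisym[OF anti p, of g] by simp
  also have "\<dots> = - Lam g h" using b by (simp add: sign_swap_id)
  finally show ?thesis by simp
qed

lemma lam_rep: "degree f < n \<Longrightarrow> poly f y = (\<Sum>m\<in>{1..n}. lam m f * poly (pp a n m) y)"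
proof -
  assume "degree f < n"
  then have eq: "f = (\<Sum>m\<in>{1..n}. smult (lam m f) (pp a n m))"
    using rep unfolding lam_def by blast
  have "poly f y = poly (\<Sum>m\<in>{1..n}. smult (lam m f) (pp a n m)) y"
    using arg_cong[OF eq, where f="\<lambda>p. poly p y"] .
  also have "\<dots> = (\<Sum>m\<in>{1..n}. lam m f * poly (pp a n m) y)" by (simp add: poly_sum)
  finally show ?thesis .
qed

lemma reproduce:
  "poly_val n l c x = (\<Sum>g\<in>PiE {1..l} (\<lambda>_. {1..n}). Lam g (poly_val n l c) * (\<Prod>b\<in>{1..l}. poly (pp a n (g b)) (x b)))"
proof -
  let ?P = "PiE {1..l} (\<lambda>_. {1..n})"
  let ?E = "PiE {1..l} (\<lambda>_. {..<n})"
  have mono: "(\<Prod>b\<in>{1..l}. x b ^ e b) = (\<Sum>g\<in>?P. (\<Prod>b\<in>{1..l}. lam (g b) (monom 1 (e b))) * (\<Prod>b\<in>{1..l}. poly (pp a n (g b)) (x b)))"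
    if e: "e \<in> ?E" for e
  proof -
    have "(\<Prod>b\<in>{1..l}. x b ^ e b) = (\<Prod>b\<in>{1..l}. \<Sum>m\<in>{1..n}. lam m (monom 1 (e b)) * poly (pp a n m) (x b))"
    proof (rule prod.cong[OF refl])
      fix b assume "b \<in> {1..l}"
      then have "degree (monom (1::complex) (e b)) < n" using e by (auto simp: PiE_iff degree_monom_eq)
      then show "x b ^ e b = (\<Sum>m\<in>{1..n}. lam m (monom 1 (e b)) * poly (pp a n m) (x b))"
        using lam_rep[of "monom 1 (e b)" "x b"] by (simp add: poly_monom)
    qed
    also have "\<dots> = (\<Sum>g\<in>?P. \<Prod>b\<in>{1..l}. lam (g b) (monom 1 (e b)) * poly (pp a n (g b)) (x b))"
      by (rule prod_sum_PiE) auto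
    finally show ?thesis by (simp add: prod.distrib)
  qed
  have LamE: "Lam g (poly_val n l c) = (\<Sum>e\<in>?E. c e * (\<Prod>b\<in>{1..l}. lam (g b) (monom 1 (e b))))" for g
  proof -
    have "poly_val n l c = (\<lambda>x. \<Sum>e\<in>?E. c e * (\<Prod>b\<in>{1..l}. poly (monom 1 (e b)) (x b)))"
      unfolding poly_val_def by (simp add: poly_monom)
    moreover have fin: "finite ?E" by (rule finite_PiE) auto
    ultimately have "Lam g (poly_val n l c) = (\<Sum>e\<in>?E. c e * Lam g (\<lambda>x. \<Prod>b\<in>{1..l}. poly (monom 1 (e b)) (x b)))"
      by (simp only: Lam_lin[OF fin])
    then show ?thesis by (simp only: Lam_prod)
  qed
  have "poly_val n l c x = (\<Sum>e\<in>?E. c e * (\<Sum>g\<in>?P. (\<Prod>b\<in>{1..l}. lam (g b) (monom 1 (e b))) * (\<Prod>b\<in>{1..l}. poly (pp a n (g b)) (x b))))"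
    unfolding poly_val_def by (rule sum.cong[OF refl]) (simp only: mono)
  also have "\<dots> = (\<Sum>g\<in>?P. (\<Sum>e\<in>?E. c e * (\<Prod>b\<in>{1..l}. lam (g b) (monom 1 (e b)))) * (\<Prod>b\<in>{1..l}. poly (pp a n (g b)) (x b)))"
    by (simp add: sum_distrib_left sum_distrib_right mult_ac) (rule sum.swap)
  finally show ?thesis by (simp add: LamE)
qed


lemma Sets_finite: "M \<in> Sets \<Longrightarrow> finite M"
proof -
  assume "M \<in> Sets"
  then have "M \<subseteq> {1..n}" unfolding Sets_def by blast
  then show "finite M" using finite_subset finite_atLeastAtMost by blast
qed

lemma melem_bij_Sets: "M \<in> Sets \<Longrightarrow> bij_betw (melem M) {1..l} M"
  by (rule melem_bij[OF Sets_finite]) (simp_all add: Sets_def)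

lemma melem_in: "M \<in> Sets \<Longrightarrow> b \<in> {1..l} \<Longrightarrow> melem M b \<in> {1..n}"
  using bij_betw_apply[OF melem_bij_Sets] unfolding Sets_def by blast

lemma perm_char:
  assumes K: "K \<in> Sets" and M: "M \<in> Sets" and p: "\<sigma> permutes {1..l}"
    and eq: "\<forall>b\<in>{1..l}. melem K b = melem M (inv \<sigma> b)"
  shows "K = M \<and> \<sigma> = id"
proof -
  have bK: "bij_betw (melem K) {1..l} K" by (rule melem_bij_Sets[OF K])
  have bM: "bij_betw (melem M) {1..l} M" by (rule melem_bij_Sets[OF M])
  have pi: "inv \<sigma> permutes {1..l}" by (rule permutes_inv[OF p])
  have "K = melem K ` {1..l}" using bK by (simp add: bij_betw_def)
  also have "\<dots> = melem M ` (inv \<sigma> ` {1..l})" using eq by (auto simp: image_iff)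
  also have "\<dots> = melem M ` {1..l}" using permutes_image[OF pi] by simp
  also have "\<dots> = M" using bM by (simp add: bij_betw_def)
  finally have KM: "K = M" .
  have "\<sigma> b = b" for b
  proof (cases "b \<in> {1..l}")
    case True
    then have "melem M b = melem M (inv \<sigma> b)" using eq KM by simp
    moreover have "inv \<sigma> b \<in> {1..l}" using permutes_in_image[OF pi] True by simp
    ultimately have "inv \<sigma> b = b" using bM True unfolding bij_betw_def inj_on_def by metis
    then show ?thesis using permutes_inverses(1)[OF p, of b] by simp
  next
    case False
    then show ?thesis using permutes_not_in[OF p] by simp
  qed
  then show ?thesis using KM by auto
qed

lemma wfun_expand: "wfun n l a M = (\<lambda>x. \<Sum>\<sigma>\<in>{\<sigma>. \<sigma> permutes {1..l}}. of_int (sign \<sigma>) * (\<Prod>b\<in>{1..l}. poly (pp a n (melem M (inv \<sigma> b))) (x b)))"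
  unfolding wfun_def by (rule ext) (rule Asym_prod_expand)

lemma Lam_w:
  assumes K: "K \<in> Sets" and M: "M \<in> Sets"
  shows "Lam (melem K) (wfun n l a M) = (if K = M then 1 else 0)"
proof -
  let ?P = "{\<sigma>. \<sigma> permutes {1..l}}"
  have fin: "finite ?P" by (simp add: finite_permutations)
  have "Lam (melem K) (wfun n l a M) = (\<Sum>\<sigma>\<in>?P. of_int (sign \<sigma>) * (\<Prod>b\<in>{1..l}. lam (melem K b) (pp a n (melem M (inv \<sigma> b)))))"
    unfolding wfun_expand by (simp only: Lam_lin[OF fin] Lam_prod)
  also have "\<dots> = (\<Sum>\<sigma>\<in>?P. if \<sigma> = id then (if K = M then 1 else 0) else 0)"
  proof (rule sum.cong[OF refl])
    fix \<sigma> assume "\<sigma> \<in> ?P"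
    then have p: "\<sigma> permutes {1..l}" by simp
    have lm: "lam (melem K b) (pp a n (melem M (inv \<sigma> b))) = (if melem K b = melem M (inv \<sigma> b) then 1 else 0)"
      if b: "b \<in> {1..l}" for b
    proof -
      have "inv \<sigma> b \<in> {1..l}" using permutes_in_image[OF permutes_inv[OF p]] b by simp
      then show ?thesis unfolding lam_def using dual melem_in[OF K b] melem_in[OF M] by blast
    qed
    show "of_int (sign \<sigma>) * (\<Prod>b\<in>{1..l}. lam (melem K b) (pp a n (melem M (inv \<sigma> b)))) =
          (if \<sigma> = id then (if K = M then 1 else 0) else 0)"
    proof (cases "\<forall>b\<in>{1..l}. melem K b = melem M (inv \<sigma> b)")
      case True
      then have "K = M \<and> \<sigma> = id" using perm_char[OF K M p] by blast
      moreover have "(\<Prod>b\<in>{1..l}. lam (melem K b) (pp a n (melem M (inv \<sigma> b)))) = 1"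
        using lm True by (intro prod.neutral) auto
      ultimately show ?thesis by simp
    next
      case False
      then obtain b where b: "b \<in> {1..l}" "melem K b \<noteq> melem M (inv \<sigma> b)" by blast
      have "(\<Prod>b\<in>{1..l}. lam (melem K b) (pp a n (melem M (inv \<sigma> b)))) = 0"
        using lm b by (intro prod_zero) auto
      moreover have "\<not> (\<sigma> = id \<and> K = M)" using b by auto
      ultimately show ?thesis by auto
    qed
  qed
  also have "\<dots> = (if K = M then 1 else 0)"
  proof -
    have idP: "id \<in> ?P" by simp
    show ?thesis by (simp only: sum.delta[OF fin] idP if_True)
  qed
  finally show ?thesis .
qed

lemma wfun_anti: "\<forall>\<sigma> x. \<sigma> permutes {1..l} \<longrightarrow> wfun n l a M (x \<circ> \<sigma>) = of_int (sign \<sigma>) * wfun n l a M x"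
  unfolding wfun_def using Asym_perm by blast

lemma wfun_poly: "M \<in> Sets \<Longrightarrow> polyfun n l (wfun n l a M)"
  unfolding wfun_def by (rule polyfun_Asym) (auto intro!: pp_degree dest: melem_in)

lemma span:
  assumes anti: "antisym_poly n l c"
  shows "poly_val n l c x = (\<Sum>K\<in>Sets. Lam (melem K) (poly_val n l c) * wfun n l a K x)"
proof -
  let ?h = "poly_val n l c"
  define h' where "h' x = ?h x - (\<Sum>K\<in>Sets. Lam (melem K) ?h * wfun n l a K x)" for x
  let ?P = "PiE {1..l} (\<lambda>_. {1..n})"
  have hanti: "\<forall>\<sigma> x. \<sigma> permutes {1..l} \<longrightarrow> ?h (x \<circ> \<sigma>) = of_int (sign \<sigma>) * ?h x"
    using anti unfolding antisym_poly_def by blast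
  have h'anti: "\<forall>\<sigma> x. \<sigma> permutes {1..l} \<longrightarrow> h' (x \<circ> \<sigma>) = of_int (sign \<sigma>) * h' x"
  proof (intro allI impI)
    fix \<sigma> x assume p: "\<sigma> permutes {1..l}"
    have "h' (x \<circ> \<sigma>) = of_int (sign \<sigma>) * ?h x - (\<Sum>K\<in>Sets. Lam (melem K) ?h * (of_int (sign \<sigma>) * wfun n l a K x))"
      unfolding h'_def using hanti wfun_anti p by simp
    also have "\<dots> = of_int (sign \<sigma>) * h' x"
      unfolding h'_def by (simp add: algebra_simps sum_distrib_left)
    finally show "h' (x \<circ> \<sigma>) = of_int (sign \<sigma>) * h' x" .
  qed
  have h'poly: "polyfun n l h'"
    unfolding h'_def
  proof (rule polyfun_diff)
    show "polyfun n l ?h" unfolding polyfun_def by blast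
    show "polyfun n l (\<lambda>x. \<Sum>K\<in>Sets. Lam (melem K) ?h * wfun n l a K x)"
      by (rule polyfun_sum) (auto simp: finite_Sets wfun_poly)
  qed
  have LamK: "Lam (melem K) h' = 0" if K: "K \<in> Sets" for K
  proof -
    have "Lam (melem K) h' = Lam (melem K) ?h - (\<Sum>M\<in>Sets. Lam (melem M) ?h * Lam (melem K) (wfun n l a M))"
      unfolding h'_def by (simp only: Lam_diff Lam_lin[OF finite_Sets])
    also have "\<dots> = Lam (melem K) ?h - (\<Sum>M\<in>Sets. if M = K then Lam (melem M) ?h else 0)"
      by (intro arg_cong2[where f="(-)"] refl sum.cong) (auto simp: Lam_w[OF K])
    also have "\<dots> = 0" using K by (simp add: sum.delta[OF finite_Sets])
    finally show ?thesis .
  qed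
  have Lamg: "Lam g h' = 0" if g: "g \<in> ?P" for g
  proof (cases "inj_on g {1..l}")
    case False
    then obtain b1 b2 where "b1 \<in> {1..l}" "b2 \<in> {1..l}" "b1 \<noteq> b2" "g b1 = g b2"
      unfolding inj_on_def by blast
    then show ?thesis by (rule Lam_noninj[OF h'anti])
  next
    case True
    define K where "K = g ` {1..l}"
    have KS: "K \<in> Sets" unfolding Sets_def K_def using g True card_image[OF True] by (auto simp: PiE_iff)
    have bK: "bij_betw (melem K) {1..l} K" by (rule melem_bij_Sets[OF KS])
    have bg: "bij_betw g {1..l} K" unfolding K_def using True by (simp add: bij_betw_def)
    define \<sigma> where "\<sigma> b = (if b \<in> {1..l} then the_inv_into {1..l} (melem K) (g b) else b)" for b
    have bs: "bij_betw \<sigma> {1..l} {1..l}"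
    proof -
      have "bij_betw (the_inv_into {1..l} (melem K) \<circ> g) {1..l} {1..l}"
        by (rule bij_betw_trans[OF bg bij_betw_the_inv_into[OF bK]])
      moreover have "bij_betw \<sigma> {1..l} {1..l} = bij_betw (the_inv_into {1..l} (melem K) \<circ> g) {1..l} {1..l}"
        by (rule bij_betw_cong) (simp add: \<sigma>_def)
      ultimately show ?thesis by simp
    qed
    have p: "\<sigma> permutes {1..l}" by (rule bij_imp_permutes[OF bs]) (auto simp: \<sigma>_def)
    have "\<forall>b\<in>{1..l}. g b = (melem K \<circ> \<sigma>) b"
    proof
      fix b assume b: "b \<in> {1..l}"
      have "g b \<in> K" using bg b by (rule bij_betw_apply)
      then show "g b = (melem K \<circ> \<sigma>) b" using b bK unfolding \<sigma>_def
        by (simp add: f_the_inv_into_f_bij_betw)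
    qed
    then have "Lam g h' = Lam (melem K \<circ> \<sigma>) h'" by (rule Lam_cong)
    also have "\<dots> = of_int (sign \<sigma>) * Lam (melem K) h'" by (rule Lam_antisym[OF h'anti p])
    also have "\<dots> = 0" using LamK[OF KS] by simp
    finally show ?thesis .
  qed
  from h'poly obtain c' where c': "\<forall>x. h' x = poly_val n l c' x" unfolding polyfun_def by blast
  then have hc: "h' = poly_val n l c'" by auto
  have "h' x = (\<Sum>g\<in>?P. Lam g (poly_val n l c') * (\<Prod>b\<in>{1..l}. poly (pp a n (g b)) (x b)))"
    using reproduce[of c' x] c' by simp
  also have "\<dots> = 0" using Lamg by (simp add: hc[symmetric])
  finally show ?thesis unfolding h'_def by simp
qed

end

lemma Efun_diff: "Efun hb (x - y) = Efun hb x / Efun hb y"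
proof -
  have "2 * of_real pi * \<i> * (x - y) / (2 * hb) = 2 * of_real pi * \<i> * x / (2 * hb) - 2 * of_real pi * \<i> * y / (2 * hb)"
    by (simp add: algebra_simps diff_divide_distrib)
  then show ?thesis unfolding Efun_def by (simp add: exp_diff)
qed

lemma Efun_nz: "Efun hb x \<noteq> 0"
  unfolding Efun_def by simp

lemma Efun_Ln:
  assumes "hb \<noteq> 0" "y \<noteq> 0"
  shows "Efun hb (2 * hb * Ln y / (2 * of_real pi * \<i>)) = y"
proof -
  have "2 * of_real pi * \<i> * (2 * hb * Ln y / (2 * of_real pi * \<i>)) / (2 * hb) = Ln y"
    using assms by (simp add: field_simps)
  then show ?thesis unfolding Efun_def using assms by simp
qed

lemma generic_sum:
  assumes hb: "hb \<noteq> 0" and g: "generic hb n z" and j: "j \<in> {1..n}" and k: "k \<in> {1..n}"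
  shows "Efun hb (z j) + Efun hb (z k) \<noteq> 0"
proof (cases "j = k")
  case True
  then show ?thesis using Efun_nz[of hb "z j"] by simp
next
  case False
  show ?thesis
  proof
    assume "Efun hb (z j) + Efun hb (z k) = 0"
    then have "exp (2 * of_real pi * \<i> * z j / (2 * hb)) = exp (2 * of_real pi * \<i> * z k / (2 * hb) + of_real pi * \<i>)"
      unfolding Efun_def by (simp add: exp_add add_eq_0_iff)
    then obtain m :: int where m: "2 * of_real pi * \<i> * z j / (2 * hb) = 2 * of_real pi * \<i> * z k / (2 * hb) + of_real pi * \<i> + of_int (2 * m) * pi * \<i>"
      unfolding exp_eq by blast
    have pi0: "(of_real pi :: complex) * \<i> \<noteq> 0" by simp
    have "(of_real pi * \<i>) * (z j / hb) = (of_real pi * \<i>) * (z k / hb + 1 + of_int (2 * m))"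
      using m by (simp add: algebra_simps)
    then have "z j / hb = z k / hb + 1 + of_int (2 * m)" using pi0 mult_left_cancel by blast
    then have "z j = z k + hb + of_int (2 * m) * hb" using hb by (simp add: field_simps)
    then have "z j - z k + hb = of_int (m + 1) * (2 * hb)" by (simp add: algebra_simps)
    then show False using g j k False unfolding generic_def by blast
  qed
qed

lemma poly_pp: "poly (pp a N m) y = - ((\<Prod>j\<in>{1..<m}. (-1 - inverse (a j) * y)) * (\<Prod>j\<in>{m<..N}. (1 - inverse (a j) * y)))"
proof -
  have "poly (pp a N m) y = - ((\<Prod>j\<in>{1..<m}. poly [:-1, -inverse (a j):] y) * (\<Prod>j\<in>{m<..N}. poly [:1, -inverse (a j):] y))"
    unfolding pp_def by (simp only: poly_smult poly_mult poly_prod) simp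
  also have "\<dots> = - ((\<Prod>j\<in>{1..<m}. (-1 - inverse (a j) * y)) * (\<Prod>j\<in>{m<..N}. (1 - inverse (a j) * y)))"
    by (simp add: algebra_simps)
  finally show ?thesis .
qed

lemma factor_id:
  fixes u :: "nat \<Rightarrow> complex"
  assumes m: "m \<in> {1..n}" and u: "\<forall>j\<in>{1..n}. u j \<noteq> 1"
  shows "(1 / (u m - 1) * (\<Prod>j\<in>{1..<m}. (u j + 1) / (u j - 1))) * (\<Prod>j\<in>{1..n}. (1 - u j))
       = - ((\<Prod>j\<in>{1..<m}. (-1 - u j)) * (\<Prod>j\<in>{m<..n}. (1 - u j)))"
proof -
  have split: "{1..n} = {1..<m} \<union> ({m} \<union> {m<..n})" using m by auto
  have "(\<Prod>j\<in>{1..n}. (1 - u j)) = (\<Prod>j\<in>{1..<m}. (1 - u j)) * ((1 - u m) * (\<Prod>j\<in>{m<..n}. (1 - u j)))"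
    unfolding split by (subst prod.union_disjoint, simp, simp, force)+ simp
  moreover have "(\<Prod>j\<in>{1..<m}. (u j + 1) / (u j - 1)) * (\<Prod>j\<in>{1..<m}. (1 - u j)) = (\<Prod>j\<in>{1..<m}. (-1 - u j))"
  proof -
    have "(\<Prod>j\<in>{1..<m}. (u j + 1) / (u j - 1)) * (\<Prod>j\<in>{1..<m}. (1 - u j)) = (\<Prod>j\<in>{1..<m}. (u j + 1) / (u j - 1) * (1 - u j))"
      by (rule prod.distrib[symmetric])
    also have "\<dots> = (\<Prod>j\<in>{1..<m}. (-1 - u j))"
    proof (rule prod.cong[OF refl])
      fix j assume "j \<in> {1..<m}"
      then have "u j - 1 \<noteq> 0" using u m by auto
      then show "(u j + 1) / (u j - 1) * (1 - u j) = -1 - u j" by (simp add: field_simps)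
    qed
    finally show ?thesis .
  qed
  moreover have "1 / (u m - 1) * (1 - u m) = -1"
  proof -
    have "u m - 1 \<noteq> 0" using u m by auto
    then show ?thesis by (simp add: field_simps)
  qed
  moreover have "\<And>x1 A B um C D :: complex. A * B = D \<Longrightarrow> x1 * um = -1 \<Longrightarrow> (x1 * A) * (B * (um * C)) = - (D * C)"
  proof -
    fix x1 A B um C D :: complex
    assume "A * B = D" "x1 * um = -1"
    have "(x1 * A) * (B * (um * C)) = (x1 * um) * (A * B) * C" by (simp only: ac_simps)
    then show "(x1 * A) * (B * (um * C)) = - (D * C)" using \<open>A * B = D\<close> \<open>x1 * um = -1\<close> by simp
  qed
  ultimately show ?thesis by presburger
qed

definition Qf :: "complex \<Rightarrow> nat \<Rightarrow> nat \<Rightarrow> (nat \<Rightarrow> complex) \<Rightarrow> (nat \<Rightarrow> complex) \<Rightarrow> complex" where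
  "Qf hb n l z t = (\<Prod>m\<in>{1..n}. \<Prod>a\<in>{1..l}. (1 - Efun hb (t a - z m)))"

lemma Efun_diff': "Efun hb (x - y) = inverse (Efun hb y) * Efun hb x"
  by (simp add: Efun_diff divide_inverse mult.commute)

lemma GQ:
  assumes M: "\<forall>b\<in>{1..l}. melem M b \<in> {1..n}" and t: "t \<in> regular_pts hb n l z"
  shows "G_fun hb l z M t * Qf hb n l z t = (\<Prod>b\<in>{1..l}. poly (pp (\<lambda>m. Efun hb (z m)) n (melem M b)) (Efun hb (t b)))"
proof -
  have "Qf hb n l z t = (\<Prod>b\<in>{1..l}. \<Prod>m\<in>{1..n}. (1 - Efun hb (t b - z m)))"
    unfolding Qf_def by (rule prod.swap)
  then have "G_fun hb l z M t * Qf hb n l z t = (\<Prod>b\<in>{1..l}.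
      ((1 / (Efun hb (t b - z (melem M b)) - 1)) *
      (\<Prod>j\<in>{1..<melem M b}. (Efun hb (t b - z j) + 1) / (Efun hb (t b - z j) - 1))) *
      (\<Prod>m\<in>{1..n}. (1 - Efun hb (t b - z m))))"
    unfolding G_fun_def by (simp only: prod.distrib)
  also have "\<dots> = (\<Prod>b\<in>{1..l}. poly (pp (\<lambda>m. Efun hb (z m)) n (melem M b)) (Efun hb (t b)))"
  proof (rule prod.cong[OF refl])
    fix b assume b: "b \<in> {1..l}"
    have u: "\<forall>j\<in>{1..n}. Efun hb (t b - z j) \<noteq> 1" using t b unfolding regular_pts_def by blast
    show "((1 / (Efun hb (t b - z (melem M b)) - 1)) *
      (\<Prod>j\<in>{1..<melem M b}. (Efun hb (t b - z j) + 1) / (Efun hb (t b - z j) - 1))) *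
      (\<Prod>m\<in>{1..n}. (1 - Efun hb (t b - z m))) = poly (pp (\<lambda>m. Efun hb (z m)) n (melem M b)) (Efun hb (t b))"
      using factor_id[OF M[rule_format, OF b] u] unfolding poly_pp by (simp only: Efun_diff')
  qed
  finally show ?thesis .
qed

lemma regular_perm:
  assumes t: "t \<in> regular_pts hb n l z" and p: "\<sigma> permutes {1..l}"
  shows "t \<circ> \<sigma> \<in> regular_pts hb n l z"
  using t permutes_in_image[OF p] unfolding regular_pts_def by auto

lemma Qf_perm:
  assumes p: "\<sigma> permutes {1..l}"
  shows "Qf hb n l z (t \<circ> \<sigma>) = Qf hb n l z t"
  unfolding Qf_def
proof (rule prod.cong[OF refl])
  fix m
  show "(\<Prod>a\<in>{1..l}. 1 - Efun hb ((t \<circ> \<sigma>) a - z m)) = (\<Prod>a\<in>{1..l}. 1 - Efun hb (t a - z m))"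
    using prod.permute[OF p, of "\<lambda>a. 1 - Efun hb (t a - z m)"] by (simp add: o_def)
qed

lemma WQ:
  assumes M: "\<forall>b\<in>{1..l}. melem M b \<in> {1..n}" and t: "t \<in> regular_pts hb n l z"
  shows "W_fun hb l z M t * Qf hb n l z t = wfun n l (\<lambda>m. Efun hb (z m)) M (\<lambda>b. Efun hb (t b))"
proof -
  have "W_fun hb l z M t * Qf hb n l z t = (\<Sum>\<sigma> | \<sigma> permutes {1..l}. of_int (sign \<sigma>) * (G_fun hb l z M (t \<circ> \<sigma>) * Qf hb n l z (t \<circ> \<sigma>)))"
    unfolding W_fun_def Asym_def sum_distrib_right
    by (rule sum.cong[OF refl]) (simp add: Qf_perm)
  also have "\<dots> = (\<Sum>\<sigma> | \<sigma> permutes {1..l}. of_int (sign \<sigma>) * (\<Prod>b\<in>{1..l}. poly (pp (\<lambda>m. Efun hb (z m)) n (melem M b)) (((\<lambda>b. Efun hb (t b)) \<circ> \<sigma>) b)))"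
    by (rule sum.cong[OF refl]) (simp add: GQ[OF M regular_perm[OF t]])
  also have "\<dots> = wfun n l (\<lambda>m. Efun hb (z m)) M (\<lambda>b. Efun hb (t b))"
    unfolding wfun_def Asym_def ..
  finally show ?thesis .
qed

theorem proposition5p1:
  fixes hb :: complex and n l :: nat and z :: "nat \<Rightarrow> complex"
  assumes "hb \<noteq> 0" and "l \<le> n" and "generic hb n z"
  shows "(\<forall>M. M \<subseteq> {1..n} \<and> card M = l \<longrightarrow> W_fun hb l z M \<in> Fspace hb n l z)
    \<and> (\<forall>F\<in>Fspace hb n l z. \<exists>!c :: nat set \<Rightarrow> complex.
         (\<forall>M. \<not> (M \<subseteq> {1..n} \<and> card M = l) \<longrightarrow> c M = 0) \<and>
         (\<forall>t\<in>regular_pts hb n l z.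
            F t = (\<Sum>M | M \<subseteq> {1..n} \<and> card M = l. c M * W_fun hb l z M t)))"
proof -
  define a where "a = (\<lambda>m. Efun hb (z m))"
  have nz: "\<forall>j\<in>{1..n}. a j \<noteq> 0" by (simp add: a_def Efun_nz)
  have gen: "\<forall>j\<in>{1..n}. \<forall>k\<in>{1..n}. a j + a k \<noteq> 0"
    using generic_sum[OF assms(1,3)] unfolding a_def by blast
  define B where "B = 1 + (\<Sum>m\<in>{1..n}. norm (a m))"
  define s where "s j = complex_of_real (B * (real j + 1))" for j
  have B1: "B \<ge> 1" unfolding B_def by (simp add: sum_nonneg)
  have s_nz: "s j \<noteq> 0" for j
  proof -
    have "B * (real j + 1) \<noteq> 0" using B1 by simp
    then show ?thesis unfolding s_def by (metis of_real_eq_0_iff)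
  qed
  have s_inj: "inj_on s {1..n}"
  proof (rule inj_onI)
    fix j k assume "s j = s k"
    then have "B * (real j + 1) = B * (real k + 1)" unfolding s_def by simp
    then show "j = k" using B1 by simp
  qed
  have s_na: "s j \<noteq> a m" if m: "m \<in> {1..n}" for j m
  proof
    assume "s j = a m"
    moreover have "norm (s j) = B * (real j + 1)" unfolding s_def norm_of_real using B1 by simp
    ultimately have "norm (a m) = B * (real j + 1)" by simp
    moreover have "norm (a m) \<le> (\<Sum>m\<in>{1..n}. norm (a m))"
      using m by (intro member_le_sum) auto
    moreover have "B * (real j + 1) \<ge> B" using B1 by simp
    ultimately show False unfolding B_def by simp
  qed
  obtain \<mu> where rep: "\<forall>f. degree f < n \<longrightarrow> f = (\<Sum>m\<in>{1..n}. smult (\<Sum>i\<in>{1..n}. \<mu> m i * poly f (s i)) (pp a n m))"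
    and dual: "\<forall>k\<in>{1..n}. \<forall>m\<in>{1..n}. (\<Sum>i\<in>{1..n}. \<mu> k i * poly (pp a n m) (s i)) = (if k = m then 1 else 0)"
    using duals[OF nz gen s_inj] by blast
  interpret mv n l a s \<mu>
    by unfold_locales (use rep dual in auto)
  have Sets_eq: "{M. M \<subseteq> {1..n} \<and> card M = l} = Sets" by (simp add: Sets_def)
  have WQ': "W_fun hb l z M t * Qf hb n l z t = wfun n l a M (\<lambda>b. Efun hb (t b))"
    if "M \<in> Sets" "t \<in> regular_pts hb n l z" for M t
    unfolding a_def by (rule WQ) (use that melem_in in auto)
  have Qnz: "Qf hb n l z t \<noteq> 0" if t: "t \<in> regular_pts hb n l z" for t
    using t unfolding Qf_def regular_pts_def by (auto simp: prod_zero_iff)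
  have P1: "\<forall>M. M \<subseteq> {1..n} \<and> card M = l \<longrightarrow> W_fun hb l z M \<in> Fspace hb n l z"
  proof (intro allI impI)
    fix M assume "M \<subseteq> {1..n} \<and> card M = l"
    then have M: "M \<in> Sets" unfolding Sets_def by simp
    obtain c where c: "\<forall>x. wfun n l a M x = poly_val n l c x"
      using wfun_poly[OF M] unfolding polyfun_def by blast
    have "antisym_poly n l c"
      unfolding antisym_poly_def using wfun_anti c by metis
    moreover have "\<forall>t\<in>regular_pts hb n l z. W_fun hb l z M t * Qf hb n l z t = poly_val n l c (\<lambda>a. Efun hb (t a))"
      using WQ'[OF M] c by simp
    ultimately show "W_fun hb l z M \<in> Fspace hb n l z"
      unfolding Fspace_def Qf_def by blast
  qed
  have P2: "\<exists>!c :: nat set \<Rightarrow> complex.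
         (\<forall>M. \<not> (M \<subseteq> {1..n} \<and> card M = l) \<longrightarrow> c M = 0) \<and>
         (\<forall>t\<in>regular_pts hb n l z.
            F t = (\<Sum>M | M \<subseteq> {1..n} \<and> card M = l. c M * W_fun hb l z M t))"
    if F: "F \<in> Fspace hb n l z" for F
  proof -
    obtain c where anti: "antisym_poly n l c"
      and Fc: "\<forall>t\<in>regular_pts hb n l z. F t * Qf hb n l z t = poly_val n l c (\<lambda>a. Efun hb (t a))"
      using F unfolding Fspace_def Qf_def by blast
    define cf where "cf M = (if M \<in> Sets then Lam (melem M) (poly_val n l c) else 0)" for M
    have ex: "F t = (\<Sum>M\<in>Sets. cf M * W_fun hb l z M t)" if t: "t \<in> regular_pts hb n l z" for t
    proof -
      have "F t * Qf hb n l z t = poly_val n l c (\<lambda>a. Efun hb (t a))" using Fc t by blast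
      also have "\<dots> = (\<Sum>K\<in>Sets. Lam (melem K) (poly_val n l c) * wfun n l a K (\<lambda>a. Efun hb (t a)))"
        by (rule span[OF anti])
      also have "\<dots> = (\<Sum>K\<in>Sets. cf K * (W_fun hb l z K t * Qf hb n l z t))"
        by (rule sum.cong[OF refl]) (simp add: cf_def WQ' t)
      also have "\<dots> = (\<Sum>K\<in>Sets. cf K * W_fun hb l z K t) * Qf hb n l z t"
        by (simp add: sum_distrib_right mult.assoc)
      finally show ?thesis using Qnz[OF t] by simp
    qed
    show ?thesis unfolding Sets_eq
    proof (rule ex1I[where a=cf], intro conjI allI impI ballI)
      show "cf M = 0" if "\<not> (M \<subseteq> {1..n} \<and> card M = l)" for M using that unfolding cf_def Sets_def by auto
      show "F t = (\<Sum>M\<in>Sets. cf M * W_fun hb l z M t)" if "t \<in> regular_pts hb n l z" for t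
        by (rule ex[OF that])
    next
      fix c1 assume H: "(\<forall>M. \<not> (M \<subseteq> {1..n} \<and> card M = l) \<longrightarrow> c1 M = 0) \<and>
         (\<forall>t\<in>regular_pts hb n l z. F t = (\<Sum>M\<in>Sets. c1 M * W_fun hb l z M t))"
      define d where "d M = c1 M - cf M" for M
      have zero: "(\<Sum>M\<in>Sets. d M * W_fun hb l z M t) = 0" if t: "t \<in> regular_pts hb n l z" for t
      proof -
        have e1: "F t = (\<Sum>M\<in>Sets. c1 M * W_fun hb l z M t)" using H t by blast
        have e2: "F t = (\<Sum>M\<in>Sets. cf M * W_fun hb l z M t)" by (rule ex[OF t])
        have "(\<Sum>M\<in>Sets. d M * W_fun hb l z M t) = (\<Sum>M\<in>Sets. c1 M * W_fun hb l z M t) - (\<Sum>M\<in>Sets. cf M * W_fun hb l z M t)"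
          unfolding d_def by (simp only: left_diff_distrib sum_subtractf)
        then show ?thesis using e1 e2 by simp
      qed
      have zi: "(\<Sum>M\<in>Sets. d M * wfun n l a M (s \<circ> i)) = 0" if i: "i \<in> PiE {1..l} (\<lambda>_. {1..n})" for i
      proof -
        define ti where "ti b = 2 * hb * Ln (s (i b)) / (2 * of_real pi * \<i>)" for b
        have Eti: "(\<lambda>b. Efun hb (ti b)) = s \<circ> i"
          unfolding ti_def using Efun_Ln[OF assms(1) s_nz] by (auto simp: fun_eq_iff)
        have reg: "ti \<in> regular_pts hb n l z"
          unfolding regular_pts_def
        proof (intro CollectI ballI)
          fix b m assume b: "b \<in> {1..l}" and m: "m \<in> {1..n}"
          have ib: "i b \<in> {1..n}" using i b by (auto simp: PiE_iff)
          have "Efun hb (ti b) = s (i b)" using fun_cong[OF Eti, of b] by simp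
          then have "Efun hb (ti b - z m) = inverse (a m) * s (i b)" by (simp add: Efun_diff' a_def)
          moreover have "inverse (a m) * s (i b) \<noteq> 1"
          proof
            assume "inverse (a m) * s (i b) = 1"
            then have "s (i b) = a m" using nz m by (simp add: field_simps)
            then show False using s_na[OF m] by blast
          qed
          ultimately show "Efun hb (ti b - z m) \<noteq> 1" by simp
        qed
        have "(\<Sum>M\<in>Sets. d M * wfun n l a M (s \<circ> i)) = (\<Sum>M\<in>Sets. d M * (W_fun hb l z M ti * Qf hb n l z ti))"
          by (rule sum.cong[OF refl]) (simp add: WQ'[OF _ reg] Eti)
        also have "\<dots> = (\<Sum>M\<in>Sets. d M * W_fun hb l z M ti) * Qf hb n l z ti"
          by (simp add: sum_distrib_right mult.assoc)
        also have "\<dots> = 0" using zero[OF reg] by simp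
        finally show ?thesis .
      qed
      show "c1 = cf"
      proof
        fix K
        show "c1 K = cf K"
        proof (cases "K \<in> Sets")
          case False
          have "\<not> (K \<subseteq> {1..n} \<and> card K = l)" using False unfolding Sets_def by blast
          then have "c1 K = 0" using H by blast
          then show ?thesis using False unfolding cf_def by simp
        next
          case True
          have "Lam (melem K) (\<lambda>x. \<Sum>M\<in>Sets. d M * wfun n l a M x) = 0"
            unfolding Lam_def by (rule sum.neutral) (simp add: zi)
          moreover have "Lam (melem K) (\<lambda>x. \<Sum>M\<in>Sets. d M * wfun n l a M x) = d K"
          proof -
            have "Lam (melem K) (\<lambda>x. \<Sum>M\<in>Sets. d M * wfun n l a M x) = (\<Sum>M\<in>Sets. d M * Lam (melem K) (wfun n l a M))"
              by (rule Lam_lin[OF finite_Sets])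
            also have "\<dots> = (\<Sum>M\<in>Sets. if M = K then d M else 0)"
              by (rule sum.cong[OF refl]) (auto simp: Lam_w[OF True])
            also have "\<dots> = d K" using True by (simp add: sum.delta[OF finite_Sets])
            finally show ?thesis .
          qed
          ultimately show ?thesis unfolding d_def by simp
        qed
      qed
    qed
  qed
  show ?thesis by (intro conjI ballI, rule P1, rule P2, assumption)
qed

end
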